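(* Let $d\in\mathbb N$, $l\in\mathbb Z_+^d$, $\rho,\sigma\in(0,\infty)^d$. There is a constant $c=c(d,l,\rho,\sigma)>0$ such that for all $x^0,y^0,X^0\in\mathbb R^d$ and $\delta,\eta,\Delta\in(0,\infty)^d$ with $$x^0+\sigma\delta I^d\subset y^0+\eta I^d\subset(y^0+\rho\delta I^d)\cap(X^0+\Delta I^d),$$ every $J\subset\{1,\dots,d\}$, every family of functions $\chi^j$ ($j\in J$) continuous on $\mathbb R$ with compact support and $\chi^j=1$ on $X^0_j+\Delta_jI$, and every $f\in C_0(\mathbb R^d)$, $$\Bigl\|\Bigl(\prod_{j\in J}V_j(E-M_{\chi^j}\mathcal P^{1,l_j}_{\sigma_j\delta_j,x^0_j})\Bigr)f\Bigr\|_{L_\infty(G)}\le c\|f\|_{L_\infty(G)},\qquad G=y^0+\eta I^d.$$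
   Context: $I=(0,1)$, $I^d=(0,1)^d$, products componentwise. For each $k\in\mathbb Z_+$ fixed distinct points $\xi^{k,0},\dots,\xi^{k,k}\in(0,1)$ are chosen; for $a\in\mathbb R$, $\delta>0$ and $g$ continuous on $(a,a+\delta)$, $\mathcal P^{1,k}_{\delta,a}g$ is the polynomial of degree $\le k$ interpolating $g$ at $a+\delta\xi^{k,\mu}$, $\mu=0,\dots,k$. $E$ is the identity and $E-M_\chi\mathcal P^{1,k}_{\delta,a}$ is the bounded operator on $C_0(\mathbb R)$, $g\mapsto g-\chi\cdot\mathcal P^{1,k}_{\delta,a}(g|_{(a,a+\delta)})$. $C_0(\mathbb R^d)$: continuous functions vanishing at infinity. For a bounded operator $T$ on $C_0(\mathbb R)$, $V_j(T)$ is the unique bounded operator on $C_0(\mathbb R^d)$ with $(V_j(T)f)(x)=(T(f(x_1,\dots,x_{j-1},\cdot,x_{j+1},\dots,x_d)))(x_j)$; these commute for different $j$. *)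

theory Defs
  imports "HOL-Analysis.Analysis" "HOL-Computational_Algebra.Polynomial"
begin

definition obox :: "real^'n \<Rightarrow> real^'n \<Rightarrow> (real^'n) set" where
  "obox a h = {x. \<forall>i. a$i < x$i \<and> x$i < a$i + h$i}"

definition cmul :: "real^'n \<Rightarrow> real^'n \<Rightarrow> real^'n" where
  "cmul a b = (\<chi> i. a$i * b$i)"

definition interp_poly ::
  "(nat \<Rightarrow> nat \<Rightarrow> real) \<Rightarrow> nat \<Rightarrow> real \<Rightarrow> real \<Rightarrow> (real \<Rightarrow> real) \<Rightarrow> real poly" where
  "interp_poly \<xi> k \<delta> a g =
     (THE p. degree p \<le> k \<and> (\<forall>\<mu>\<le>k. poly p (a + \<delta> * \<xi> k \<mu>) = g (a + \<delta> * \<xi> k \<mu>)))"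

definition E_minus_MP ::
  "(nat \<Rightarrow> nat \<Rightarrow> real) \<Rightarrow> (real \<Rightarrow> real) \<Rightarrow> nat \<Rightarrow> real \<Rightarrow> real
    \<Rightarrow> (real \<Rightarrow> real) \<Rightarrow> (real \<Rightarrow> real)" where
  "E_minus_MP \<xi> cf k \<delta> a g = (\<lambda>t. g t - cf t * poly (interp_poly \<xi> k \<delta> a g) t)"

definition Vop :: "'n \<Rightarrow> ((real \<Rightarrow> real) \<Rightarrow> (real \<Rightarrow> real))
    \<Rightarrow> (real^'n \<Rightarrow> real) \<Rightarrow> (real^'n \<Rightarrow> real)" where
  "Vop j T f = (\<lambda>x. T (\<lambda>s. f (\<chi> i. if i = j then s else x$i)) (x$j))"

text \<open>Product (composition) of V_j(T_j) over j in J; the factors commute, the order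
  is fixed by an arbitrary enumeration of J.\<close>
definition Vprod :: "'n set \<Rightarrow> ('n \<Rightarrow> ((real \<Rightarrow> real) \<Rightarrow> (real \<Rightarrow> real)))
    \<Rightarrow> (real^'n \<Rightarrow> real) \<Rightarrow> (real^'n \<Rightarrow> real)" where
  "Vprod J T = foldr (\<lambda>j acc. Vop j (T j) \<circ> acc) (SOME js. distinct js \<and> set js = J) id"

definition C0 :: "(real^'n \<Rightarrow> real) set" where
  "C0 = {f. continuous_on UNIV f \<and> (f \<longlongrightarrow> 0) at_infinity}"

text \<open>Sup norm over G (equal to the L_infinity(G) norm for continuous functions on open G).\<close>
definition supG :: "(real^'n) set \<Rightarrow> (real^'n \<Rightarrow> real) \<Rightarrow> ereal" where
  "supG G f = (SUP x\<in>G. ereal \<bar>f x\<bar>)"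

end

theory Submission imports Defs begin

definition lagr :: "(nat \<Rightarrow> real) \<Rightarrow> nat \<Rightarrow> nat \<Rightarrow> real poly" where
  "lagr z k \<mu> = (\<Prod>\<nu>\<in>{..k}-{\<mu>}. smult (1/(z \<mu> - z \<nu>)) [:- z \<nu>, 1:])"

lemma poly_lagr: "poly (lagr z k \<mu>) t = (\<Prod>\<nu>\<in>{..k}-{\<mu>}. (t - z \<nu>)/(z \<mu> - z \<nu>))"
  unfolding lagr_def poly_prod by (intro prod.cong) (auto simp: diff_divide_distrib)

lemma degree_lagr: "\<mu> \<le> k \<Longrightarrow> degree (lagr z k \<mu>) \<le> k"
proof -
  assume "\<mu> \<le> k"
  have "degree (lagr z k \<mu>) \<le> sum (degree \<circ> (\<lambda>\<nu>. smult (1/(z \<mu> - z \<nu>)) [:- z \<nu>, 1:])) ({..k}-{\<mu>})"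
    unfolding lagr_def by (rule degree_prod_sum_le) auto
  also have "\<dots> \<le> sum (\<lambda>_. 1) ({..k}-{\<mu>})"
    by (intro sum_mono) (auto simp: degree_smult_le)
  also have "\<dots> = k" using \<open>\<mu> \<le> k\<close> by simp
  finally show ?thesis .
qed

lemma poly_lagr_node:
  assumes "inj_on z {..k}" "\<mu> \<le> k" "\<mu>' \<le> k"
  shows "poly (lagr z k \<mu>) (z \<mu>') = (if \<mu> = \<mu>' then 1 else 0)"
proof (cases "\<mu> = \<mu>'")
  case True
  have "\<And>\<nu>. \<nu> \<in> {..k}-{\<mu>} \<Longrightarrow> z \<mu> - z \<nu> \<noteq> 0"
    using assms inj_on_eq_iff by fastforce
  then show ?thesis unfolding poly_lagr using True by (auto intro: prod.neutral)
next
  case False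
  have "\<mu>' \<in> {..k}-{\<mu>}" using False assms by auto
  then show ?thesis unfolding poly_lagr using False
    by (auto intro!: prod_zero bexI[of _ \<mu>'])
qed

definition lagrP :: "(nat \<Rightarrow> real) \<Rightarrow> nat \<Rightarrow> (real \<Rightarrow> real) \<Rightarrow> real poly" where
  "lagrP z k g = (\<Sum>\<mu>\<le>k. smult (g (z \<mu>)) (lagr z k \<mu>))"

lemma lagrP_props:
  assumes "inj_on z {..k}"
  shows "degree (lagrP z k g) \<le> k" "\<And>\<mu>'. \<mu>' \<le> k \<Longrightarrow> poly (lagrP z k g) (z \<mu>') = g (z \<mu>')"
proof -
  show "degree (lagrP z k g) \<le> k" unfolding lagrP_def
    by (intro degree_sum_le) (auto intro: order.trans[OF degree_smult_le] degree_lagr)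
  fix \<mu>' assume "\<mu>' \<le> k"
  have "poly (lagrP z k g) (z \<mu>') = (\<Sum>\<mu>\<le>k. g (z \<mu>) * (if \<mu> = \<mu>' then 1 else 0))"
    unfolding lagrP_def poly_sum using assms \<open>\<mu>' \<le> k\<close>
    by (intro sum.cong) (auto simp: poly_lagr_node)
  also have "\<dots> = g (z \<mu>')" using \<open>\<mu>' \<le> k\<close> by (simp add: if_distrib sum.delta cong: if_cong)
  finally show "poly (lagrP z k g) (z \<mu>') = g (z \<mu>')" .
qed

lemma interp_eq:
  assumes dist: "\<And>\<mu> \<nu>. \<mu> \<le> k \<Longrightarrow> \<nu> \<le> k \<Longrightarrow> \<mu> \<noteq> \<nu> \<Longrightarrow> \<xi> k \<mu> \<noteq> \<xi> k \<nu>"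
    and "\<delta> > 0"
  shows "interp_poly \<xi> k \<delta> a g = lagrP (\<lambda>\<mu>. a + \<delta> * \<xi> k \<mu>) k g"
proof -
  let ?z = "\<lambda>\<mu>. a + \<delta> * \<xi> k \<mu>"
  have inj: "inj_on ?z {..k}" using dist \<open>\<delta> > 0\<close> by (auto simp: inj_on_def)
  have card: "card (?z ` {..k}) = Suc k" using card_image[OF inj] by simp
  show ?thesis unfolding interp_poly_def
  proof (rule the_equality)
    show "degree (lagrP ?z k g) \<le> k \<and> (\<forall>\<mu>\<le>k. poly (lagrP ?z k g) (?z \<mu>) = g (?z \<mu>))"
      using lagrP_props[OF inj] by auto
  next
    fix p assume p: "degree p \<le> k \<and> (\<forall>\<mu>\<le>k. poly p (?z \<mu>) = g (?z \<mu>))"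
    show "p = lagrP ?z k g"
    proof (rule poly_eqI_degree[where A = "?z ` {..k}"])
      fix x assume "x \<in> ?z ` {..k}"
      then show "poly p x = poly (lagrP ?z k g) x" using p lagrP_props[OF inj] by auto
    qed (use card p lagrP_props[OF inj] in \<open>auto simp: less_Suc_eq_le\<close>)
  qed
qed


lemma obox_sub_coord:
  fixes a h b k :: "real^'n"
  assumes "obox a h \<subseteq> obox b k" "\<forall>i. 0 < h$i" "a$i < s" "s < a$i + h$i"
  shows "b$i < s \<and> s < b$i + k$i"
proof -
  define p where "p = (\<chi> i'. if i' = i then s else a$i' + h$i'/2)"
  have "p \<in> obox a h" using assms(2-4) unfolding p_def obox_def
    by (auto simp: add_pos_pos)
  hence "p \<in> obox b k" using assms(1) by blast
  hence "b$i < p$i \<and> p$i < b$i + k$i" unfolding obox_def by blast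
  moreover have "p$i = s" by (simp add: p_def)
  ultimately show ?thesis by simp
qed

lemma Vop_bound:
  fixes y0 \<eta> x :: "real^'n"
  assumes dist: "\<And>\<mu> \<nu>. \<mu> \<le> k \<Longrightarrow> \<nu> \<le> k \<Longrightarrow> \<mu> \<noteq> \<nu> \<Longrightarrow> \<xi> k \<mu> \<noteq> \<xi> k \<nu>"
    and hh: "hh > 0"
    and nodes: "\<forall>\<mu>\<le>k. y0$j < a + hh*\<xi> k \<mu> \<and> a + hh*\<xi> k \<mu> < y0$j + \<eta>$j"
    and cf1: "\<forall>t. y0$j < t \<and> t < y0$j+\<eta>$j \<longrightarrow> cf t = 1"
    and eta: "\<eta>$j \<le> R*hh"
    and hM: "\<forall>x\<in>obox y0 \<eta>. \<bar>h x\<bar> \<le> M"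
    and x: "x \<in> obox y0 \<eta>"
  shows "\<bar>Vop j (E_minus_MP \<xi> cf k hh a) h x\<bar>
     \<le> (1 + (\<Sum>\<mu>\<le>k. \<Prod>\<nu>\<in>{..k}-{\<mu>}. R/\<bar>\<xi> k \<mu> - \<xi> k \<nu>\<bar>)) * M"
proof -
  define g where "g = (\<lambda>s. h (\<chi> i. if i = j then s else x$i))"
  define z where "z = (\<lambda>\<mu>. a + hh * \<xi> k \<mu>)"
  have xj: "y0$j < x$j \<and> x$j < y0$j + \<eta>$j" using x unfolding obox_def by auto
  have gM: "\<bar>g s\<bar> \<le> M" if "y0$j < s" "s < y0$j + \<eta>$j" for s
  proof -
    have "(\<chi> i. if i = j then s else x$i) \<in> obox y0 \<eta>" using x that unfolding obox_def by auto
    thus ?thesis using hM unfolding g_def by blast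
  qed
  have "(\<chi> i. if i = j then x$j else x$i) = x" by (simp add: vec_eq_iff)
  hence gx: "g (x$j) = h x" unfolding g_def by simp
  have V: "Vop j (E_minus_MP \<xi> cf k hh a) h x = h x - poly (lagrP z k g) (x$j)"
  proof -
    have "Vop j (E_minus_MP \<xi> cf k hh a) h x = g (x$j) - cf (x$j) * poly (interp_poly \<xi> k hh a g) (x$j)"
      unfolding Vop_def E_minus_MP_def g_def by simp
    also have "\<dots> = h x - poly (lagrP z k g) (x$j)"
      using interp_eq[where k=k and \<xi>=\<xi> and \<delta>=hh, OF dist hh] cf1 xj gx unfolding z_def by simp
    finally show ?thesis .
  qed
  have M0: "0 \<le> M" using hM x by force
  have fac: "\<bar>(x$j - z \<nu>)/(z \<mu> - z \<nu>)\<bar> \<le> R/\<bar>\<xi> k \<mu> - \<xi> k \<nu>\<bar>"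
    if "\<mu> \<le> k" "\<nu> \<le> k" "\<nu> \<noteq> \<mu>" for \<mu> \<nu>
  proof -
    have ne: "\<xi> k \<mu> - \<xi> k \<nu> \<noteq> 0" using dist that by auto
    have d: "\<bar>z \<mu> - z \<nu>\<bar> = hh * \<bar>\<xi> k \<mu> - \<xi> k \<nu>\<bar>"
      unfolding z_def using hh by (simp add: abs_mult right_diff_distrib[symmetric])
    have "y0$j < z \<nu> \<and> z \<nu> < y0$j + \<eta>$j" using nodes that unfolding z_def by blast
    hence n: "\<bar>x$j - z \<nu>\<bar> \<le> R * hh" using xj eta by (simp add: abs_le_iff)
    have "\<bar>(x$j - z \<nu>)/(z \<mu> - z \<nu>)\<bar> = \<bar>x$j - z \<nu>\<bar> / (hh * \<bar>\<xi> k \<mu> - \<xi> k \<nu>\<bar>)"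
      by (simp add: d)
    also have "\<dots> \<le> (R*hh) / (hh * \<bar>\<xi> k \<mu> - \<xi> k \<nu>\<bar>)"
      using n ne hh by (intro divide_right_mono) auto
    also have "\<dots> = R/\<bar>\<xi> k \<mu> - \<xi> k \<nu>\<bar>" using hh by simp
    finally show ?thesis .
  qed
  have "\<bar>poly (lagrP z k g) (x$j)\<bar> = \<bar>\<Sum>\<mu>\<le>k. g (z \<mu>) * (\<Prod>\<nu>\<in>{..k}-{\<mu>}. (x$j - z \<nu>)/(z \<mu> - z \<nu>))\<bar>"
    unfolding lagrP_def poly_sum by (simp add: poly_lagr)
  also have "\<dots> \<le> (\<Sum>\<mu>\<le>k. \<bar>g (z \<mu>)\<bar> * (\<Prod>\<nu>\<in>{..k}-{\<mu>}. \<bar>(x$j - z \<nu>)/(z \<mu> - z \<nu>)\<bar>))"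
    by (rule order.trans[OF sum_abs]) (simp add: abs_mult abs_prod)
  also have "\<dots> \<le> (\<Sum>\<mu>\<le>k. M * (\<Prod>\<nu>\<in>{..k}-{\<mu>}. R/\<bar>\<xi> k \<mu> - \<xi> k \<nu>\<bar>))"
  proof (intro sum_mono mult_mono prod_mono conjI)
    fix \<mu> assume "\<mu> \<in> {..k}"
    thus "\<bar>g (z \<mu>)\<bar> \<le> M" using nodes gM unfolding z_def by auto
  qed (use M0 fac in \<open>auto intro: prod_nonneg\<close>)
  also have "\<dots> = M * (\<Sum>\<mu>\<le>k. \<Prod>\<nu>\<in>{..k}-{\<mu>}. R/\<bar>\<xi> k \<mu> - \<xi> k \<nu>\<bar>)"
    by (simp add: sum_distrib_left)
  finally have P: "\<bar>poly (lagrP z k g) (x$j)\<bar> \<le> M * (\<Sum>\<mu>\<le>k. \<Prod>\<nu>\<in>{..k}-{\<mu>}. R/\<bar>\<xi> k \<mu> - \<xi> k \<nu>\<bar>)" .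
  have "\<bar>h x\<bar> \<le> M" using hM x by blast
  hence "\<bar>h x - poly (lagrP z k g) (x$j)\<bar> \<le> M + M * (\<Sum>\<mu>\<le>k. \<Prod>\<nu>\<in>{..k}-{\<mu>}. R/\<bar>\<xi> k \<mu> - \<xi> k \<nu>\<bar>)"
    using P abs_triangle_ineq4[of "h x" "poly (lagrP z k g) (x$j)"] by linarith
  thus ?thesis unfolding V by (simp add: algebra_simps)
qed


lemma foldr_bound:
  fixes G :: "(real^'n) set"
  assumes step: "\<And>j h M. j \<in> set js \<Longrightarrow> (\<forall>x\<in>G. \<bar>h x\<bar> \<le> M) \<Longrightarrow> (\<forall>x\<in>G. \<bar>Vop j (T j) h x\<bar> \<le> C * M)"
  shows "(\<forall>x\<in>G. \<bar>h x\<bar> \<le> M) \<Longrightarrow> \<forall>x\<in>G. \<bar>foldr (\<lambda>j acc. Vop j (T j) \<circ> acc) js id h x\<bar> \<le> C ^ length js * M"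
  using step
proof (induction js arbitrary: h M)
  case Nil
  then show ?case by simp
next
  case (Cons j js)
  have "\<forall>x\<in>G. \<bar>foldr (\<lambda>j acc. Vop j (T j) \<circ> acc) js id h x\<bar> \<le> C ^ length js * M"
    by (rule Cons.IH[OF Cons.prems(1)]) (meson Cons.prems(2) list.set_intros(2))
  from Cons.prems(2)[OF _ this] have "\<forall>x\<in>G. \<bar>Vop j (T j) (foldr (\<lambda>j acc. Vop j (T j) \<circ> acc) js id h) x\<bar> \<le> C * (C ^ length js * M)"
    by simp
  moreover have "foldr (\<lambda>j acc. Vop j (T j) \<circ> acc) (j#js) id h = Vop j (T j) (foldr (\<lambda>j acc. Vop j (T j) \<circ> acc) js id h)"
    by (simp only: foldr_Cons comp_apply)
  moreover have "C ^ length (j#js) * M = C * (C^length js * M)" by simp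
  ultimately show ?case by metis
qed

theorem lemma2p1p6:
  fixes \<xi> :: "nat \<Rightarrow> nat \<Rightarrow> real"
    and l :: "nat^'n" and \<rho> \<sigma> :: "real^'n"
  assumes \<xi>_in: "\<And>k \<mu>. \<mu> \<le> k \<Longrightarrow> 0 < \<xi> k \<mu> \<and> \<xi> k \<mu> < 1"
    and \<xi>_dist: "\<And>k \<mu> \<nu>. \<mu> \<le> k \<Longrightarrow> \<nu> \<le> k \<Longrightarrow> \<mu> \<noteq> \<nu> \<Longrightarrow> \<xi> k \<mu> \<noteq> \<xi> k \<nu>"
    and \<rho>_pos: "\<forall>i. 0 < \<rho>$i" and \<sigma>_pos: "\<forall>i. 0 < \<sigma>$i"
  shows "\<exists>c>0. \<forall>x0 y0 X0 \<delta> \<eta> \<Delta> :: real^'n.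
    (\<forall>i. 0 < \<delta>$i) \<longrightarrow> (\<forall>i. 0 < \<eta>$i) \<longrightarrow> (\<forall>i. 0 < \<Delta>$i) \<longrightarrow>
    obox x0 (cmul \<sigma> \<delta>) \<subseteq> obox y0 \<eta> \<longrightarrow>
    obox y0 \<eta> \<subseteq> obox y0 (cmul \<rho> \<delta>) \<inter> obox X0 \<Delta> \<longrightarrow>
    (\<forall>(J :: 'n set) (cf :: 'n \<Rightarrow> real \<Rightarrow> real) f.
      (\<forall>j\<in>J. continuous_on UNIV (cf j) \<and> compact (closure {t. cf j t \<noteq> 0}) \<and>
               (\<forall>t. X0$j < t \<and> t < X0$j + \<Delta>$j \<longrightarrow> cf j t = 1)) \<longrightarrow>
      f \<in> C0 \<longrightarrow>
      supG (obox y0 \<eta>)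
        (Vprod J (\<lambda>j. E_minus_MP \<xi> (cf j) (l$j) (\<sigma>$j * \<delta>$j) (x0$j)) f)
      \<le> ereal c * supG (obox y0 \<eta>) f)"
proof -
  define Lam where "Lam = (\<lambda>j. \<Sum>\<mu>\<le>l$j. \<Prod>\<nu>\<in>{..l$j}-{\<mu>}. (\<rho>$j/\<sigma>$j)/\<bar>\<xi> (l$j) \<mu> - \<xi> (l$j) \<nu>\<bar>)"
  have Lam0: "0 \<le> Lam j" for j
    unfolding Lam_def using \<rho>_pos \<sigma>_pos by (intro sum_nonneg prod_nonneg divide_nonneg_nonneg) (auto simp: less_imp_le)
  define C where "C = 1 + (\<Sum>j\<in>UNIV. Lam j)"
  have C1: "1 + Lam j \<le> C" for j
    unfolding C_def using member_le_sum[of j UNIV Lam] Lam0 by simp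
  have Cge: "1 \<le> C" using C1[of undefined] Lam0[of undefined] by linarith
  define c where "c = C ^ CARD('n)"
  have c0: "c > 0" unfolding c_def using Cge by simp
  show ?thesis
  proof (intro exI[of _ c] conjI c0 allI impI)
    fix x0 y0 X0 \<delta> \<eta> \<Delta> :: "real^'n" and J :: "'n set" and cf :: "'n \<Rightarrow> real \<Rightarrow> real" and f
    assume \<delta>: "\<forall>i. 0 < \<delta>$i" and \<eta>: "\<forall>i. 0 < \<eta>$i" and \<Delta>: "\<forall>i. 0 < \<Delta>$i"
      and sub1: "obox x0 (cmul \<sigma> \<delta>) \<subseteq> obox y0 \<eta>"
      and sub2: "obox y0 \<eta> \<subseteq> obox y0 (cmul \<rho> \<delta>) \<inter> obox X0 \<Delta>"
      and cfJ: "\<forall>j\<in>J. continuous_on UNIV (cf j) \<and> compact (closure {t. cf j t \<noteq> 0}) \<and>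
               (\<forall>t. X0$j < t \<and> t < X0$j + \<Delta>$j \<longrightarrow> cf j t = 1)"
    define G where "G = obox y0 \<eta>"
    define T where "T = (\<lambda>j. E_minus_MP \<xi> (cf j) (l$j) (\<sigma>$j * \<delta>$j) (x0$j))"
    have sd: "\<forall>i. 0 < cmul \<sigma> \<delta> $ i" using \<sigma>_pos \<delta> by (simp add: cmul_def)
    have step: "\<forall>x\<in>G. \<bar>Vop j (T j) h x\<bar> \<le> C * M"
      if j: "j \<in> J" and hM: "\<forall>x\<in>G. \<bar>h x\<bar> \<le> M" for j h M
    proof
      fix x assume x: "x \<in> G"
      have hh: "\<sigma>$j * \<delta>$j > 0" using \<sigma>_pos \<delta> by simp
      have nodes: "\<forall>\<mu>\<le>l$j. y0$j < x0$j + (\<sigma>$j * \<delta>$j)*\<xi> (l$j) \<mu> \<and> x0$j + (\<sigma>$j * \<delta>$j)*\<xi> (l$j) \<mu> < y0$j + \<eta>$j"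
      proof (intro allI impI)
        fix \<mu> assume "\<mu> \<le> l$j"
        hence "0 < \<xi> (l$j) \<mu>" "\<xi> (l$j) \<mu> < 1" using \<xi>_in by auto
        moreover have "(\<sigma>$j * \<delta>$j)*\<xi> (l$j) \<mu> < (\<sigma>$j * \<delta>$j)*1"
          using hh calculation by (intro mult_strict_left_mono) auto
        ultimately have "x0$j < x0$j + (\<sigma>$j * \<delta>$j)*\<xi> (l$j) \<mu>" "x0$j + (\<sigma>$j * \<delta>$j)*\<xi> (l$j) \<mu> < x0$j + cmul \<sigma> \<delta> $ j"
          using hh by (auto simp: cmul_def)
        thus "y0$j < x0$j + (\<sigma>$j * \<delta>$j)*\<xi> (l$j) \<mu> \<and> x0$j + (\<sigma>$j * \<delta>$j)*\<xi> (l$j) \<mu> < y0$j + \<eta>$j"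
          using obox_sub_coord[OF sub1 sd] by blast
      qed
      have cf1: "\<forall>t. y0$j < t \<and> t < y0$j+\<eta>$j \<longrightarrow> cf j t = 1"
      proof (intro allI impI)
        fix t assume "y0$j < t \<and> t < y0$j+\<eta>$j"
        hence "X0$j < t \<and> t < X0$j + \<Delta>$j" using obox_sub_coord[of y0 \<eta> X0 \<Delta>] sub2 \<eta> by blast
        thus "cf j t = 1" using cfJ j by blast
      qed
      have eta: "\<eta>$j \<le> (\<rho>$j/\<sigma>$j) * (\<sigma>$j * \<delta>$j)"
      proof (rule ccontr)
        assume "\<not> ?thesis"
        hence "y0$j + \<rho>$j*\<delta>$j < y0$j + \<eta>$j" using \<sigma>_pos[rule_format, of j] by (simp add: field_simps)
        moreover have "y0$j < y0$j + \<rho>$j*\<delta>$j" using \<rho>_pos \<delta> by simp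
        ultimately have "y0$j + \<rho>$j*\<delta>$j < y0$j + cmul \<rho> \<delta> $ j"
          using obox_sub_coord[of y0 \<eta> y0 "cmul \<rho> \<delta>"] sub2 \<eta> by blast
        thus False by (simp add: cmul_def)
      qed
      have "\<bar>Vop j (T j) h x\<bar> \<le> (1 + Lam j) * M"
        unfolding T_def Lam_def
        by (rule Vop_bound[where k="l$j" and \<xi>=\<xi>, OF \<xi>_dist hh nodes cf1 eta]) (use hM x G_def in auto)
      also have "\<dots> \<le> C * M"
        using C1[of j] hM x by (intro mult_right_mono) force+
      finally show "\<bar>Vop j (T j) h x\<bar> \<le> C * M" .
    qed
    define js where "js = (SOME js. distinct js \<and> set js = J)"
    have js: "distinct js \<and> set js = J"
      unfolding js_def by (rule someI_ex) (use finite_distinct_list[of J] in auto)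
    have Vp: "Vprod J T = foldr (\<lambda>j acc. Vop j (T j) \<circ> acc) js id"
      unfolding Vprod_def js_def by simp
    have len: "length js \<le> CARD('n)"
      using js distinct_card[of js] card_mono[of UNIV J] by auto
    have ne: "(\<chi> i. y0$i + \<eta>$i/2) \<in> G" unfolding G_def obox_def using \<eta> by auto
    show "supG G (Vprod J T f) \<le> ereal c * supG G f"
    proof (cases "supG G f = \<infinity>")
      case True
      then show ?thesis using c0 by simp
    next
      case False
      have "ereal \<bar>f ((\<chi> i. y0$i + \<eta>$i/2))\<bar> \<le> supG G f" unfolding supG_def using ne by (rule SUP_upper)
      hence "supG G f \<noteq> -\<infinity>" by auto
      then obtain M where M: "supG G f = ereal M" using False by (cases "supG G f") auto
      have fM: "\<forall>x\<in>G. \<bar>f x\<bar> \<le> M"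
      proof
        fix x assume "x \<in> G"
        hence "ereal \<bar>f x\<bar> \<le> supG G f" unfolding supG_def by (rule SUP_upper)
        thus "\<bar>f x\<bar> \<le> M" using M by simp
      qed
      have M0: "0 \<le> M" using fM ne by force
      have B: "\<forall>x\<in>G. \<bar>Vprod J T f x\<bar> \<le> C ^ length js * M"
        unfolding Vp by (rule foldr_bound[OF _ fM]) (use step js in blast)
      have "C ^ length js * M \<le> c * M"
        unfolding c_def using Cge len M0 by (intro mult_right_mono power_increasing) auto
      hence "\<forall>x\<in>G. \<bar>Vprod J T f x\<bar> \<le> c * M" using B by force
      hence "supG G (Vprod J T f) \<le> ereal (c * M)" unfolding supG_def
        by (intro SUP_least) simp
      thus ?thesis using M by simp
    qed
  qed
qed

end
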